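(* There is no automorphism $\varphi$ of $E$ of type 4 such that, for some basis $\{e_n\}_{n\in\mathbb{N}}$ of $L$, $\varphi(e_n)=-e_n+b_n$ for every $n\in\mathbb{N}$, where each $b_n$ is a nonzero scalar multiple of a monomial $e_{i_1}\cdots e_{i_m}$ in the generators.
   Context: $F$ is a field of characteristic zero, $L$ an infinite-dimensional $F$-vector space, $E$ its Grassmann algebra; for a basis $\{e_n\}$ of $L$, $E$ has basis $1$ and the monomials $e_{i_1}\cdots e_{i_m}$, $i_1<\cdots<i_m$, with $e_ie_j=-e_je_i$. An automorphism $\varphi$ of $E$ with $\varphi^2=\mathrm{id}$ is of type 4 if for every basis $\gamma$ of $L$ the set $\{n\mid \varphi(\gamma_n)=\pm\gamma_n\}$ is empty, i.e. no element $v$ of any basis $\gamma$ of $L$ satisfies $\varphi(v)=v$ or $\varphi(v)=-v$. *)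

theory Defs
  imports Main "HOL-Library.Function_Algebras"
begin

text \<open>Concrete model of the Grassmann algebra E of a vector space L with a
countable basis: elements of E are finitely supported coefficient functions
on finite subsets of nat (the standard monomials eps_{i1}...eps_{im}, i1<...<im).\<close>

type_synonym 'a grass = "nat set \<Rightarrow> 'a"

definition Grass :: "'a::field grass set" where
  "Grass = {x. finite {U. x U \<noteq> 0} \<and> (\<forall>U. x U \<noteq> 0 \<longrightarrow> finite U)}"

definition Lspace :: "'a::field grass set" where
  "Lspace = {x \<in> Grass. \<forall>U. x U \<noteq> 0 \<longrightarrow> card U = 1}"

definition gsmult :: "'a::field \<Rightarrow> 'a grass \<Rightarrow> 'a grass" where
  "gsmult c x = (\<lambda>U. c * x U)"

text \<open>sign of eps_S * eps_T for disjoint S, T\<close>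
definition gsign :: "nat set \<Rightarrow> nat set \<Rightarrow> 'a::field" where
  "gsign S T = (-1) ^ card {(s, t). s \<in> S \<and> t \<in> T \<and> t < s}"

definition gmult :: "'a::field grass \<Rightarrow> 'a grass \<Rightarrow> 'a grass" where
  "gmult x y = (\<lambda>U. if finite U then (\<Sum>S\<in>Pow U. gsign S (U - S) * x S * y (U - S)) else 0)"

definition gone :: "'a::field grass" where
  "gone = (\<lambda>U. if U = {} then 1 else 0)"

definition gspan :: "'a::field grass set \<Rightarrow> 'a grass set" where
  "gspan B = {(\<Sum>a\<in>t. gsmult (r a) a) | t r. finite t \<and> t \<subseteq> B}"

definition gindependent :: "'a::field grass set \<Rightarrow> bool" where
  "gindependent S \<longleftrightarrow> (\<forall>t u v. finite t \<longrightarrow> t \<subseteq> S \<longrightarrow>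
      (\<Sum>w\<in>t. gsmult (u w) w) = 0 \<longrightarrow> v \<in> t \<longrightarrow> u v = 0)"

definition is_basis_L :: "'a::field grass set \<Rightarrow> bool" where
  "is_basis_L B \<longleftrightarrow> B \<subseteq> Lspace \<and> gindependent B \<and> gspan B = Lspace"

definition is_basis_seq_L :: "(nat \<Rightarrow> 'a::field grass) \<Rightarrow> bool" where
  "is_basis_seq_L e \<longleftrightarrow> inj e \<and> is_basis_L (range e)"

definition grass_aut :: "('a::field grass \<Rightarrow> 'a grass) \<Rightarrow> bool" where
  "grass_aut \<phi> \<longleftrightarrow> bij_betw \<phi> Grass Grass
     \<and> (\<forall>x\<in>Grass. \<forall>y\<in>Grass. \<phi> (x + y) = \<phi> x + \<phi> y)
     \<and> (\<forall>c. \<forall>x\<in>Grass. \<phi> (gsmult c x) = gsmult c (\<phi> x))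
     \<and> (\<forall>x\<in>Grass. \<forall>y\<in>Grass. \<phi> (gmult x y) = gmult (\<phi> x) (\<phi> y))
     \<and> \<phi> gone = gone"

definition involutive_on_E :: "('a::field grass \<Rightarrow> 'a grass) \<Rightarrow> bool" where
  "involutive_on_E \<phi> \<longleftrightarrow> (\<forall>x\<in>Grass. \<phi> (\<phi> x) = x)"

definition type4 :: "('a::field grass \<Rightarrow> 'a grass) \<Rightarrow> bool" where
  "type4 \<phi> \<longleftrightarrow> (\<forall>B. is_basis_L B \<longrightarrow> (\<forall>v\<in>B. \<phi> v \<noteq> v \<and> \<phi> v \<noteq> - v))"

definition monomial_in :: "(nat \<Rightarrow> 'a::field grass) \<Rightarrow> 'a grass \<Rightarrow> bool" where
  "monomial_in e b \<longleftrightarrow> (\<exists>is. is \<noteq> [] \<and> sorted_wrt (<) is \<and> b = foldr gmult (map e is) gone)"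

end

theory Submission
  imports Defs
begin

lemma fun_sum_apply: "(\<Sum>a\<in>A. g a) U = (\<Sum>a\<in>A. g a U)"
  by (induction A rule: infinite_finite_induct) auto

definition sg :: "nat \<Rightarrow> nat set \<Rightarrow> 'a::field" where
  "sg u U = (-1) ^ card {t\<in>U. t < u}"

lemma sg_sq: "sg u U * sg u U = (1::'a::field)"
  by (simp add: sg_def power_mult_distrib[symmetric])

lemma sg_insert:
  assumes "finite W" "t \<notin> W"
  shows "sg u (insert t W) = (if t < u then -1 else 1) * (sg u W :: 'a::field)"
proof (cases "t < u")
  case True
  have "{x\<in>insert t W. x < u} = insert t {x\<in>W. x < u}" using True by auto
  moreover have "card (insert t {x\<in>W. x < u}) = Suc (card {x\<in>W. x < u})"
    using assms by simp
  ultimately show ?thesis using True by (simp add: sg_def)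
next
  case False
  have "{x\<in>insert t W. x < u} = {x\<in>W. x < u}" using False by auto
  then show ?thesis using False by (simp add: sg_def)
qed

lemma sg_swap:
  assumes "finite W" "u \<notin> W" "k \<notin> W" "u \<noteq> k"
  shows "sg k (insert u W) * sg u (insert k W) = - (sg k W * (sg u W :: 'a::field))"
  using assms by (auto simp add: sg_insert)

lemma gsign_left: "finite T \<Longrightarrow> gsign {u} T = sg u T"
proof -
  have "{(s, t). s \<in> {u} \<and> t \<in> T \<and> t < s} = (\<lambda>t. (u,t)) ` {t\<in>T. t < u}" by auto
  moreover have "card ((\<lambda>t. (u,t)) ` {t\<in>T. t < u}) = card {t\<in>T. t < u}"
    by (rule card_image) (auto simp: inj_on_def)
  ultimately show ?thesis by (simp add: gsign_def sg_def)
qed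

lemma gsign_right: "gsign T {u} = (-1) ^ card {t\<in>T. u < t}"
proof -
  have "{(s, t). s \<in> T \<and> t \<in> {u} \<and> t < s} = (\<lambda>t. (t,u)) ` {t\<in>T. u < t}" by auto
  moreover have "card ((\<lambda>t. (t,u)) ` {t\<in>T. u < t}) = card {t\<in>T. u < t}"
    by (rule card_image) (auto simp: inj_on_def)
  ultimately show ?thesis by (simp add: gsign_def)
qed

lemma Lspace_single: "v \<in> Lspace \<Longrightarrow> v S \<noteq> 0 \<Longrightarrow> \<exists>x. S = {x}"
  by (auto simp: Lspace_def card_1_singleton_iff)

lemma gmult_L:
  assumes "v \<in> Lspace" "finite U"
  shows "gmult v y U = (\<Sum>u\<in>U. v {u} * sg u (U - {u}) * y (U - {u}))"
proof -
  have "gmult v y U = (\<Sum>S\<in>Pow U. gsign S (U-S) * v S * y (U-S))"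
    using assms by (simp add: gmult_def)
  also have "\<dots> = (\<Sum>S\<in>(\<lambda>u. {u}) ` U. gsign S (U-S) * v S * y (U-S))"
  proof (rule sum.mono_neutral_right)
    show "finite (Pow U)" using assms by simp
    show "(\<lambda>u. {u}) ` U \<subseteq> Pow U" by auto
    show "\<forall>i\<in>Pow U - (\<lambda>u. {u}) ` U. gsign i (U - i) * v i * y (U - i) = 0"
      using Lspace_single[OF assms(1)] by fastforce
  qed
  also have "\<dots> = (\<Sum>u\<in>U. gsign {u} (U-{u}) * v {u} * y (U-{u}))"
    by (subst sum.reindex) (auto simp: inj_on_def)
  also have "\<dots> = (\<Sum>u\<in>U. v {u} * sg u (U - {u}) * y (U - {u}))"
    using assms by (intro sum.cong) (auto simp: gsign_left)
  finally show ?thesis .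
qed

lemma gmult_R:
  assumes "v \<in> Lspace" "finite U"
  shows "gmult y v U = (\<Sum>u\<in>U. gsign (U - {u}) {u} * y (U - {u}) * v {u})"
proof -
  have "gmult y v U = (\<Sum>S\<in>Pow U. gsign S (U-S) * y S * v (U-S))"
    using assms by (simp add: gmult_def)
  also have "\<dots> = (\<Sum>S\<in>(\<lambda>u. U - {u}) ` U. gsign S (U-S) * y S * v (U-S))"
  proof (rule sum.mono_neutral_right)
    show "finite (Pow U)" using assms by simp
    show "(\<lambda>u. U - {u}) ` U \<subseteq> Pow U" by auto
    show "\<forall>i\<in>Pow U - (\<lambda>u. U - {u}) ` U. gsign i (U - i) * y i * v (U - i) = 0"
    proof
      fix S assume S: "S \<in> Pow U - (\<lambda>u. U - {u}) ` U"
      show "gsign S (U - S) * y S * v (U - S) = 0"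
      proof (rule ccontr)
        assume "gsign S (U - S) * y S * v (U - S) \<noteq> 0"
        then have "v (U - S) \<noteq> 0" by auto
        then obtain x where x: "U - S = {x}" using Lspace_single[OF assms(1)] by blast
        then have "S = U - {x}" "x \<in> U" using S by auto
        then show False using S by auto
      qed
    qed
  qed
  also have "\<dots> = (\<Sum>u\<in>U. gsign (U - {u}) (U - (U - {u})) * y (U - {u}) * v (U - (U - {u})))"
    by (subst sum.reindex) (auto simp: inj_on_def)
  also have "\<dots> = (\<Sum>u\<in>U. gsign (U - {u}) {u} * y (U - {u}) * v {u})"
    by (intro sum.cong) (auto simp: Diff_Diff_Int Int_absorb1)
  finally show ?thesis .
qed

definition homog :: "nat \<Rightarrow> 'a::field grass \<Rightarrow> bool" where
  "homog d x \<longleftrightarrow> (\<forall>U. x U \<noteq> 0 \<longrightarrow> card U = d)"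

definition geq :: "nat \<Rightarrow> 'a::field grass \<Rightarrow> bool" where
  "geq d x \<longleftrightarrow> (\<forall>U. x U \<noteq> 0 \<longrightarrow> d \<le> card U)"

lemma gmult_nz:
  assumes "gmult x y U \<noteq> 0"
  shows "finite U \<and> (\<exists>S\<subseteq>U. x S \<noteq> 0 \<and> y (U - S) \<noteq> 0)"
proof -
  have fU: "finite U" using assms by (auto simp: gmult_def split: if_splits)
  then have "(\<Sum>S\<in>Pow U. gsign S (U-S) * x S * y (U-S)) \<noteq> 0" using assms by (simp add: gmult_def)
  then obtain S where "S \<in> Pow U" "gsign S (U-S) * x S * y (U-S) \<noteq> 0"
    by (meson sum.not_neutral_contains_not_neutral)
  then show ?thesis using fU by auto
qed

lemma homog_gmult: "homog a x \<Longrightarrow> homog b y \<Longrightarrow> homog (a+b) (gmult x y)"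
  unfolding homog_def
proof (intro allI impI)
  fix U assume hx: "\<forall>U. x U \<noteq> 0 \<longrightarrow> card U = a" and hy: "\<forall>U. y U \<noteq> 0 \<longrightarrow> card U = b"
    and nz: "gmult x y U \<noteq> 0"
  from gmult_nz[OF nz] obtain S where "finite U" "S \<subseteq> U" "x S \<noteq> 0" "y (U-S) \<noteq> 0" by blast
  then show "card U = a + b" using hx hy card_Diff_subset[of S U] card_mono[of U S]
    by (metis le_add_diff_inverse finite_subset)
qed

lemma geq_gmult: "geq a x \<Longrightarrow> geq b y \<Longrightarrow> geq (a+b) (gmult x y)"
  unfolding geq_def
proof (intro allI impI)
  fix U assume hx: "\<forall>U. x U \<noteq> 0 \<longrightarrow> a \<le> card U" and hy: "\<forall>U. y U \<noteq> 0 \<longrightarrow> b \<le> card U"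
    and nz: "gmult x y U \<noteq> 0"
  from gmult_nz[OF nz] obtain S where "finite U" "S \<subseteq> U" "x S \<noteq> 0" "y (U-S) \<noteq> 0" by blast
  then show "a + b \<le> card U" using hx hy card_Diff_subset[of S U] card_mono[of U S]
    by (metis add_le_mono le_add_diff_inverse finite_subset)
qed

lemma homog_geq: "homog a x \<Longrightarrow> geq a x" by (simp add: homog_def geq_def)
lemma geq_mono: "geq a x \<Longrightarrow> b \<le> a \<Longrightarrow> geq b x" by (auto simp: geq_def)
lemma geq_add: "geq a x \<Longrightarrow> geq a y \<Longrightarrow> geq a (x + y)"
  unfolding geq_def by (metis add.right_neutral plus_fun_apply)
lemma geq_uminus: "geq a x \<Longrightarrow> geq a (- x)" by (auto simp: geq_def)
lemma geq_smult: "geq a x \<Longrightarrow> geq a (gsmult c x)" by (auto simp: geq_def gsmult_def)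
lemma homog_smult: "homog a x \<Longrightarrow> homog a (gsmult c x)" by (auto simp: homog_def gsmult_def)
lemma homog_L: "v \<in> Lspace \<Longrightarrow> homog 1 v" by (auto simp: homog_def Lspace_def)
lemma homog_gone: "homog 0 gone" by (auto simp: homog_def gone_def)

lemma Grass_iff: "x \<in> Grass \<longleftrightarrow> finite {U. x U \<noteq> 0} \<and> (\<forall>U. x U \<noteq> 0 \<longrightarrow> finite U)"
  by (simp add: Grass_def)

lemma Grass_add: "x \<in> Grass \<Longrightarrow> y \<in> Grass \<Longrightarrow> x + y \<in> Grass"
proof -
  assume a: "x \<in> Grass" "y \<in> Grass"
  have "{U. (x+y) U \<noteq> 0} \<subseteq> {U. x U \<noteq> 0} \<union> {U. y U \<noteq> 0}" by auto
  then show ?thesis using a unfolding Grass_iff by (auto intro: finite_subset)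
qed

lemma Grass_uminus: "x \<in> Grass \<Longrightarrow> - x \<in> Grass"
  by (simp add: Grass_iff)

lemma Grass_smult: "x \<in> Grass \<Longrightarrow> gsmult c x \<in> Grass"
proof -
  assume a: "x \<in> Grass"
  have "{U. gsmult c x U \<noteq> 0} \<subseteq> {U. x U \<noteq> 0}" by (auto simp: gsmult_def)
  then show ?thesis using a unfolding Grass_iff by (auto intro: finite_subset simp: gsmult_def)
qed

lemma Grass_zero: "0 \<in> Grass" by (simp add: Grass_iff)

lemma Grass_gone: "gone \<in> Grass"
proof -
  have "{U. gone U \<noteq> (0::'a)} = {{}}" by (auto simp: gone_def)
  then show ?thesis by (auto simp: Grass_iff gone_def)
qed

lemma Lspace_Grass: "Lspace \<subseteq> Grass" by (auto simp: Lspace_def)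

lemma Grass_gmult: "x \<in> Grass \<Longrightarrow> y \<in> Grass \<Longrightarrow> gmult x y \<in> Grass"
proof -
  assume a: "x \<in> Grass" "y \<in> Grass"
  have "{U. gmult x y U \<noteq> 0} \<subseteq> (\<lambda>(S,T). S \<union> T) ` ({U. x U \<noteq> 0} \<times> {U. y U \<noteq> 0})"
  proof
    fix U assume "U \<in> {U. gmult x y U \<noteq> 0}"
    from gmult_nz[of x y U] this obtain S where "S \<subseteq> U" "x S \<noteq> 0" "y (U-S) \<noteq> 0" by auto
    then show "U \<in> (\<lambda>(S,T). S \<union> T) ` ({U. x U \<noteq> 0} \<times> {U. y U \<noteq> 0})"
      by (intro image_eqI[of _ _ "(S, U - S)"]) auto
  qed
  moreover have "finite ((\<lambda>(S,T). S \<union> T) ` ({U. x U \<noteq> 0} \<times> {U. y U \<noteq> 0}))"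
    using a by (auto simp: Grass_iff)
  ultimately show ?thesis using gmult_nz[of x y] by (auto simp: Grass_iff intro: finite_subset)
qed

lemma gmult_add_left: "gmult (x + y) z = gmult x z + gmult y z"
  by (auto simp: gmult_def fun_eq_iff sum.distrib[symmetric] algebra_simps)
lemma gmult_add_right: "gmult x (y + z) = gmult x y + gmult x z"
  by (auto simp: gmult_def fun_eq_iff sum.distrib[symmetric] algebra_simps)
lemma gmult_uminus_left: "gmult (- x) z = - gmult x z"
  by (auto simp: gmult_def fun_eq_iff sum_negf[symmetric])
lemma gmult_uminus_right: "gmult x (- z) = - gmult x z"
  by (auto simp: gmult_def fun_eq_iff sum_negf[symmetric])
lemma gmult_smult_left: "gmult (gsmult c x) z = gsmult c (gmult x z)"
  by (auto simp: gmult_def gsmult_def fun_eq_iff sum_distrib_left algebra_simps)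
lemma gmult_smult_right: "gmult x (gsmult c z) = gsmult c (gmult x z)"
  by (auto simp: gmult_def gsmult_def fun_eq_iff sum_distrib_left algebra_simps)
lemma gmult_zero_left: "gmult 0 z = 0"
  by (auto simp: gmult_def fun_eq_iff)
lemma gmult_zero_right: "gmult x 0 = 0"
  by (auto simp: gmult_def fun_eq_iff)

lemma gmult_gone_right:
  assumes "\<forall>U. x U \<noteq> 0 \<longrightarrow> finite U"
  shows "gmult x gone = x"
proof
  fix U
  show "gmult x gone U = x U"
  proof (cases "finite U")
    case True
    have "gmult x gone U = (\<Sum>S\<in>Pow U. gsign S (U-S) * x S * gone (U-S))"
      using True by (simp add: gmult_def)
    also have "\<dots> = (\<Sum>S\<in>{U}. gsign S (U-S) * x S * gone (U-S))"
      by (rule sum.mono_neutral_right) (use True in \<open>auto simp: gone_def\<close>)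
    also have "\<dots> = gsign U (U-U) * x U * gone (U-U)" by simp
    also have "\<dots> = x U" by (simp add: gsign_def gone_def)
    finally show ?thesis .
  next
    case False then show ?thesis using assms by (auto simp: gmult_def)
  qed
qed

lemma neg1_pow_aux: "((-1::'a::field) ^ (a + b)) * (-1) ^ a = (-1) ^ b"
proof -
  have e: "(a + b) + a = 2*a + b" by simp
  have "((-1::'a) ^ (a + b)) * (-1) ^ a = (-1) ^ (2*a + b)"
    by (metis power_add e)
  also have "\<dots> = (-1) ^ b" by (simp add: power_add power_mult)
  finally show ?thesis .
qed

lemma gsign_right_sg:
  assumes "finite W" "u \<notin> W"
  shows "gsign W {u} = (-1) ^ card W * (sg u W :: 'a::field)"
proof -
  have W: "W = {t\<in>W. t < u} \<union> {t\<in>W. u < t}" using assms by auto (metis linorder_neqE_nat)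
  have "card W = card {t\<in>W. t < u} + card {t\<in>W. u < t}"
    using assms by (subst W, subst card_Un_disjoint) auto
  then show ?thesis by (simp add: gsign_right sg_def neg1_pow_aux[of "card {t\<in>W. t < u}", simplified mult.commute] mult.commute)
qed

lemma gmult_comm_L:
  assumes "homog l y" "v \<in> Lspace"
  shows "gmult y v = gsmult ((-1) ^ l) (gmult v y)"
proof
  fix U
  show "gmult y v U = gsmult ((-1) ^ l) (gmult v y) U"
  proof (cases "finite U")
    case False then show ?thesis by (simp add: gmult_def gsmult_def)
  next
    case True
    have "gmult y v U = (\<Sum>u\<in>U. gsign (U - {u}) {u} * y (U - {u}) * v {u})"
      using gmult_R[OF assms(2) True] .
    also have "\<dots> = (\<Sum>u\<in>U. (-1) ^ l * (v {u} * sg u (U - {u}) * y (U - {u})))"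
    proof (rule sum.cong)
      fix u assume u: "u \<in> U"
      show "gsign (U - {u}) {u} * y (U - {u}) * v {u} = (-1) ^ l * (v {u} * sg u (U - {u}) * y (U - {u}))"
      proof (cases "y (U - {u}) = 0")
        case False
        then have "card (U - {u}) = l" using assms(1) by (simp add: homog_def)
        then have "gsign (U - {u}) {u} = (-1) ^ l * (sg u (U - {u}) :: 'a)"
          using gsign_right_sg[of "U - {u}" u] True by simp
        then show ?thesis by (simp add: algebra_simps)
      qed simp
    qed simp
    also have "\<dots> = gsmult ((-1) ^ l) (gmult v y) U"
      by (simp add: gsmult_def gmult_L[OF assms(2) True] sum_distrib_left)
    finally show ?thesis .
  qed
qed

lemma sg_pair:
  assumes "finite W" "u \<notin> W" "u' \<notin> W" "u \<noteq> u'"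
  shows "sg u (insert u' W) * sg u' W = - (sg u' (insert u W) * (sg u W :: 'a::field))"
  using assms by (cases "u < u'") (auto simp: sg_insert)

lemma gmult_anti:
  assumes "v \<in> Lspace" "w \<in> Lspace"
  shows "gmult v (gmult w x) = - gmult w (gmult v x)"
proof
  fix U
  show "gmult v (gmult w x) U = (- gmult w (gmult v x)) U"
  proof (cases "finite U")
    case False then show ?thesis by (simp add: gmult_def)
  next
    case True
    define F where "F = (\<lambda>u u'. v {u} * w {u'} * (sg u (U - {u}) * sg u' (U - {u} - {u'})) * x (U - {u} - {u'}))"
    define G where "G = (\<lambda>u u'. v {u} * w {u'} * (sg u' (U - {u'}) * sg u (U - {u'} - {u})) * x (U - {u'} - {u}))"
    have "gmult v (gmult w x) U = (\<Sum>u\<in>U. \<Sum>u'\<in>{u'\<in>U. u \<noteq> u'}. F u u')"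
      using True unfolding F_def
      by (simp add: gmult_L[OF assms(1)] gmult_L[OF assms(2)] sum_distrib_left set_diff_eq algebra_simps
          conj_commute eq_commute[of u for u])
    moreover have "gmult w (gmult v x) U = (\<Sum>u'\<in>U. \<Sum>u\<in>{u\<in>U. u \<noteq> u'}. G u u')"
      using True unfolding G_def
      by (simp add: gmult_L[OF assms(1)] gmult_L[OF assms(2)] sum_distrib_left set_diff_eq algebra_simps)
    moreover have "(\<Sum>u'\<in>U. \<Sum>u\<in>{u\<in>U. u \<noteq> u'}. G u u') = (\<Sum>u\<in>U. \<Sum>u'\<in>{u'\<in>U. u \<noteq> u'}. G u u')"
      by (rule sum.swap_restrict[OF True True])
    moreover have "(\<Sum>u\<in>U. \<Sum>u'\<in>{u'\<in>U. u \<noteq> u'}. F u u') = - (\<Sum>u\<in>U. \<Sum>u'\<in>{u'\<in>U. u \<noteq> u'}. G u u')"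
    proof -
      have "\<And>u u'. u \<in> U \<Longrightarrow> u' \<in> U \<Longrightarrow> u \<noteq> u' \<Longrightarrow> F u u' = - G u u'"
      proof -
        fix u u' assume h: "u \<in> U" "u' \<in> U" "u \<noteq> u'"
        define W where "W = U - {u} - {u'}"
        have e1: "U - {u} = insert u' W" "U - {u'} = insert u W" "U - {u'} - {u} = W"
          using h unfolding W_def by auto
        have "sg u (insert u' W) * sg u' W = - (sg u' (insert u W) * (sg u W :: 'a))"
          by (rule sg_pair) (use True h in \<open>auto simp: W_def\<close>)
        moreover have "u \<notin> W" "u' \<notin> W" unfolding W_def by auto
        ultimately show "F u u' = - G u u'" unfolding F_def G_def e1 by simp
      qed
      then show ?thesis by (auto simp: sum_negf[symmetric] intro!: sum.cong)
    qed
    ultimately show ?thesis by simp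
  qed
qed

definition dd :: "(nat \<Rightarrow> 'a::field) \<Rightarrow> nat set \<Rightarrow> 'a grass \<Rightarrow> 'a grass" where
  "dd f K y = (\<lambda>U. if finite U then (\<Sum>k\<in>K. (if k \<in> U then 0 else f k * sg k U * y (insert k U))) else 0)"

lemma dd_zero: "dd f K 0 = 0"
  by (auto simp: dd_def fun_eq_iff intro!: sum.neutral)

lemma dd_gone: "dd f K gone = 0"
  by (auto simp: dd_def fun_eq_iff gone_def intro!: sum.neutral)

lemma dd_leibniz:
  assumes K: "finite K" and v: "v \<in> Lspace" and vK: "\<forall>k. v {k} \<noteq> 0 \<longrightarrow> k \<in> K"
    and y: "\<forall>U. y U \<noteq> 0 \<longrightarrow> finite U"
  shows "dd f K (gmult v y) = gsmult (\<Sum>k\<in>K. f k * v {k}) y - gmult v (dd f K y)"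
proof
  fix U
  show "dd f K (gmult v y) U = (gsmult (\<Sum>k\<in>K. f k * v {k}) y - gmult v (dd f K y)) U"
  proof (cases "finite U")
    case False then show ?thesis using y by (auto simp: dd_def gmult_def gsmult_def)
  next
    case fU: True
    define D where "D = (\<lambda>k u. v {u} * sg u (U - {u}) * (if k \<in> U - {u} then 0 else f k * sg k (U - {u}) * y (insert k (U - {u}))))"
    have key: "(if k \<in> U then 0 else f k * sg k U * gmult v y (insert k U)) = f k * v {k} * y U - (\<Sum>u\<in>U. D k u)" for k
    proof (cases "k \<in> U")
      case True
      have "(\<Sum>u\<in>U. D k u) = D k k + (\<Sum>u\<in>U - {k}. D k u)"
        using fU True by (simp add: sum.remove)
      also have "(\<Sum>u\<in>U - {k}. D k u) = 0"
        using True by (intro sum.neutral) (auto simp: D_def)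
      also have "D k k = f k * v {k} * y U"
        using True by (simp add: D_def insert_absorb) (metis (no_types) sg_sq mult.assoc mult.left_commute mult_1_right)
      finally show ?thesis using True by simp
    next
      case False
      have A: "gmult v y (insert k U) = v {k} * sg k U * y U + (\<Sum>u\<in>U. v {u} * sg u (insert k (U - {u})) * y (insert k (U - {u})))"
      proof -
        have "gmult v y (insert k U) = (\<Sum>u\<in>insert k U. v {u} * sg u (insert k U - {u}) * y (insert k U - {u}))"
          using fU by (simp add: gmult_L[OF v])
        also have "\<dots> = v {k} * sg k U * y U + (\<Sum>u\<in>U. v {u} * sg u (insert k U - {u}) * y (insert k U - {u}))"
          using fU False by (simp add: sum.insert)
        also have "(\<Sum>u\<in>U. v {u} * sg u (insert k U - {u}) * y (insert k U - {u})) = (\<Sum>u\<in>U. v {u} * sg u (insert k (U - {u})) * y (insert k (U - {u})))"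
          using False by (intro sum.cong) (auto simp: insert_Diff_if)
        finally show ?thesis .
      qed
      have "f k * sg k U * (\<Sum>u\<in>U. v {u} * sg u (insert k (U - {u})) * y (insert k (U - {u}))) = - (\<Sum>u\<in>U. D k u)"
      proof -
        have "f k * sg k U * (v {u} * sg u (insert k (U - {u})) * y (insert k (U - {u}))) = - D k u" if u: "u \<in> U" for u
        proof -
          have Ueq: "U = insert u (U - {u})" using u by auto
          have "sg k (insert u (U - {u})) * sg u (insert k (U - {u})) = - (sg k (U - {u}) * (sg u (U - {u}) :: 'a))"
            by (rule sg_swap) (use fU False u in auto)
          then have H: "sg k U * sg u (insert k (U - {u})) = - (sg k (U - {u}) * (sg u (U - {u}) :: 'a))"
            using Ueq by metis
          have nk: "k \<notin> U - {u}" using False by auto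
          have "f k * sg k U * (v {u} * sg u (insert k (U - {u})) * y (insert k (U - {u})))
              = f k * v {u} * y (insert k (U - {u})) * (sg k U * sg u (insert k (U - {u})))"
            by (simp add: mult_ac)
          also have "\<dots> = - (f k * v {u} * y (insert k (U - {u})) * (sg k (U - {u}) * sg u (U - {u})))"
            by (simp only: H) simp
          also have "\<dots> = - D k u" unfolding D_def if_not_P[OF nk] by (simp add: mult_ac)
          finally show ?thesis .
        qed
        then show ?thesis by (simp add: sum_distrib_left sum_negf[symmetric] cong: sum.cong)
      qed
      then have B: "f k * sg k U * (\<Sum>u\<in>U. v {u} * sg u (insert k (U - {u})) * y (insert k (U - {u}))) = - (\<Sum>u\<in>U. D k u)" .
      have "f k * sg k U * gmult v y (insert k U) = f k * sg k U * (v {k} * sg k U * y U)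
           + f k * sg k U * (\<Sum>u\<in>U. v {u} * sg u (insert k (U - {u})) * y (insert k (U - {u})))"
        by (simp only: A distrib_left)
      also have "\<dots> = f k * v {k} * y U * (sg k U * sg k U) - (\<Sum>u\<in>U. D k u)"
        by (simp only: B) (simp add: mult_ac)
      also have "\<dots> = f k * v {k} * y U - (\<Sum>u\<in>U. D k u)" by (simp add: sg_sq)
      finally show ?thesis using False by simp
    qed
    have "dd f K (gmult v y) U = (\<Sum>k\<in>K. (if k \<in> U then 0 else f k * sg k U * gmult v y (insert k U)))"
      using fU by (simp add: dd_def)
    also have "\<dots> = (\<Sum>k\<in>K. f k * v {k} * y U - (\<Sum>u\<in>U. D k u))"
      using key by simp
    also have "\<dots> = (\<Sum>k\<in>K. f k * v {k}) * y U - (\<Sum>u\<in>U. \<Sum>k\<in>K. D k u)"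
      by (simp add: sum_subtractf sum_distrib_right sum.swap[of _ U K])
    also have "(\<Sum>u\<in>U. \<Sum>k\<in>K. D k u) = gmult v (dd f K y) U"
      using fU by (simp add: gmult_L[OF v] D_def dd_def sum_distrib_left)
    finally show ?thesis by (simp add: gsmult_def)
  qed
qed

definition eps :: "nat \<Rightarrow> 'a::field grass" where
  "eps k = (\<lambda>U. if U = {k} then 1 else 0)"

lemma eps_L: "eps k \<in> Lspace"
proof -
  have "{U. eps k U \<noteq> (0::'a)} = {{k}}" by (auto simp: eps_def)
  then show ?thesis by (auto simp: Lspace_def Grass_def eps_def)
qed

lemma gsmult_apply: "gsmult c x U = c * x U" by (simp add: gsmult_def)

lemma L_fin_idx: "v \<in> Lspace \<Longrightarrow> finite {k. v {k} \<noteq> 0}"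
proof -
  assume v: "v \<in> Lspace"
  have "{k. v {k} \<noteq> 0} = (\<lambda>k. {k}) -` {U. v U \<noteq> 0}" by auto
  moreover have fin: "finite {U. v U \<noteq> 0}" using v by (auto simp: Lspace_def Grass_def)
  have "finite ((\<lambda>k. {k}) -` {U. v U \<noteq> 0})"
    by (rule finite_vimageI) (use fin in \<open>auto simp: inj_on_def\<close>)
  ultimately show ?thesis by simp
qed

lemma L_expand:
  assumes v: "v \<in> Lspace" and K: "finite K" "\<forall>k. v {k} \<noteq> 0 \<longrightarrow> k \<in> K"
  shows "v U = (\<Sum>k\<in>K. v {k} * eps k U)"
proof (cases "\<exists>k0. U = {k0}")
  case True
  then obtain k0 where U: "U = {k0}" by blast
  have "(\<Sum>k\<in>K. v {k} * eps k U) = (\<Sum>k\<in>K. if k = k0 then v {k0} else 0)"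
    by (intro sum.cong) (auto simp: eps_def U)
  also have "\<dots> = v U" using K U by (auto simp: sum.delta')
  finally show ?thesis by simp
next
  case False
  then have "v U = 0" using Lspace_single[OF v] by blast
  moreover have "(\<Sum>k\<in>K. v {k} * eps k U) = 0"
    using False by (intro sum.neutral) (auto simp: eps_def)
  ultimately show ?thesis by simp
qed

lemma dual_exists:
  assumes B: "is_basis_seq_L e" and J: "finite J" "n \<in> J"
  shows "\<exists>K f. finite K \<and> (\<forall>j\<in>J. \<forall>k. e j {k} \<noteq> 0 \<longrightarrow> k \<in> K) \<and>
     (\<forall>j\<in>J. (\<Sum>k\<in>K. f k * e j {k}) = (if j = n then 1 else (0::'a::field)))"
proof -
  have eL: "e j \<in> Lspace" for j using B by (auto simp: is_basis_seq_L_def is_basis_L_def)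
  have inj: "inj e" using B by (simp add: is_basis_seq_L_def)
  have ind: "gindependent (range e)" and sp: "gspan (range e) = Lspace"
    using B by (auto simp: is_basis_seq_L_def is_basis_L_def)
  have "\<forall>k. \<exists>t. \<exists>r. eps k = (\<Sum>a\<in>t. gsmult (r a) a) \<and> finite t \<and> t \<subseteq> range e"
  proof
    fix k
    have "eps k \<in> gspan (range e)" using eps_L sp by simp
    then show "\<exists>t. \<exists>r. eps k = (\<Sum>a\<in>t. gsmult (r a) a) \<and> finite t \<and> t \<subseteq> range e"
      unfolding gspan_def by blast
  qed
  then obtain T where T: "\<forall>k. \<exists>r. eps k = (\<Sum>a\<in>T k. gsmult (r a) a) \<and> finite (T k) \<and> T k \<subseteq> range e"
    by (rule choice[THEN exE])
  then obtain R where R: "\<forall>k. eps k = (\<Sum>a\<in>T k. gsmult (R k a) a) \<and> finite (T k) \<and> T k \<subseteq> range e"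
    by (rule choice[THEN exE])
  then have TR: "\<And>k. eps k = (\<Sum>a\<in>T k. gsmult (R k a) a) \<and> finite (T k) \<and> T k \<subseteq> range e"
    by blast
  define K where "K = (\<Union>j\<in>J. {k. e j {k} \<noteq> 0})"
  have fK: "finite K" unfolding K_def using J L_fin_idx[OF eL] by auto
  have Kin: "\<forall>j\<in>J. \<forall>k. e j {k} \<noteq> 0 \<longrightarrow> k \<in> K" unfolding K_def by auto
  define R' where "R' = (\<lambda>k a. if a \<in> T k then R k a else 0)"
  define f where "f = (\<lambda>k. R' k (e n))"
  define TT where "TT = e ` J \<union> (\<Union>k\<in>K. T k)"
  have fTT: "finite TT" unfolding TT_def using J fK TR by auto
  have TTe: "TT \<subseteq> range e" unfolding TT_def using TR by auto
  have epsTT: "eps k U = (\<Sum>a\<in>TT. R' k a * a U)" if k: "k \<in> K" for k U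
  proof -
    have "eps k U = (\<Sum>a\<in>T k. R k a * a U)"
      by (subst TR[of k, THEN conjunct1]) (simp add: fun_sum_apply gsmult_apply)
    also have "\<dots> = (\<Sum>a\<in>TT. R' k a * a U)"
      by (rule sum.mono_neutral_cong_left) (use fTT k in \<open>auto simp: TT_def R'_def\<close>)
    finally show ?thesis .
  qed
  have main: "(\<Sum>k\<in>K. f k * e j {k}) = (if j = n then 1 else 0)" if j: "j \<in> J" for j
  proof -
    define u where "u = (\<lambda>a. (\<Sum>k\<in>K. e j {k} * R' k a) - (if a = e j then 1 else 0))"
    have ejTT: "e j \<in> TT" using j by (auto simp: TT_def)
    have "(\<Sum>a\<in>TT. gsmult (u a) a) = 0"
    proof
      fix U
      have swp: "(\<Sum>a\<in>TT. (\<Sum>k\<in>K. e j {k} * R' k a) * a U) = (\<Sum>k\<in>K. e j {k} * (\<Sum>a\<in>TT. R' k a * a U))"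
      proof -
        have "(\<Sum>a\<in>TT. (\<Sum>k\<in>K. e j {k} * R' k a) * a U) = (\<Sum>a\<in>TT. \<Sum>k\<in>K. e j {k} * (R' k a * a U))"
          by (simp add: sum_distrib_right mult.assoc)
        also have "\<dots> = (\<Sum>k\<in>K. \<Sum>a\<in>TT. e j {k} * (R' k a * a U))" by (rule sum.swap)
        also have "\<dots> = (\<Sum>k\<in>K. e j {k} * (\<Sum>a\<in>TT. R' k a * a U))" by (simp add: sum_distrib_left)
        finally show ?thesis .
      qed
      have "(\<Sum>a\<in>TT. gsmult (u a) a) U = (\<Sum>a\<in>TT. (\<Sum>k\<in>K. e j {k} * R' k a) * a U) - (\<Sum>a\<in>TT. (if a = e j then 1 else 0) * a U)"
        by (simp add: fun_sum_apply gsmult_apply u_def left_diff_distrib sum_subtractf)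
      also have "(\<Sum>a\<in>TT. (if a = e j then 1 else 0) * a U) = (\<Sum>a\<in>TT. if a = e j then e j U else 0)"
        by (intro sum.cong) auto
      also have "\<dots> = e j U" using fTT ejTT by simp
      also have "(\<Sum>a\<in>TT. (\<Sum>k\<in>K. e j {k} * R' k a) * a U) = (\<Sum>k\<in>K. e j {k} * (\<Sum>a\<in>TT. R' k a * a U))"
        by (rule swp)
      also have "\<dots> = (\<Sum>k\<in>K. e j {k} * eps k U)"
        by (intro sum.cong) (auto simp: epsTT)
      also have "\<dots> = e j U"
        by (rule sym, rule L_expand[OF eL fK]) (use Kin j in auto)
      finally show "(\<Sum>a\<in>TT. gsmult (u a) a) U = 0 U" by simp
    qed
    moreover have "e n \<in> TT" using J by (auto simp: TT_def)
    ultimately have "u (e n) = 0"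
      using ind fTT TTe unfolding gindependent_def by blast
    then have "(\<Sum>k\<in>K. e j {k} * R' k (e n)) = (if e n = e j then 1 else 0)"
      unfolding u_def by (auto split: if_splits)
    moreover have "(\<Sum>k\<in>K. f k * e j {k}) = (\<Sum>k\<in>K. e j {k} * R' k (e n))"
      by (simp add: f_def mult.commute)
    moreover have "(e n = e j) = (j = n)" using inj by (auto simp: inj_eq)
    ultimately show ?thesis by simp
  qed
  show ?thesis using fK Kin main by blast
qed

definition mon :: "(nat \<Rightarrow> 'a::field grass) \<Rightarrow> nat list \<Rightarrow> 'a grass" where
  "mon e is = foldr gmult (map e is) gone"

lemma mon_Nil[simp]: "mon e [] = gone" by (simp add: mon_def)
lemma mon_Cons[simp]: "mon e (i # is) = gmult (e i) (mon e is)" by (simp add: mon_def)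

lemma mon_Grass: "(\<And>j. e j \<in> Lspace) \<Longrightarrow> mon e is \<in> Grass"
  by (induction "is") (auto intro: Grass_gmult Grass_gone Lspace_Grass[THEN subsetD])

lemma Grass_fin: "x \<in> Grass \<Longrightarrow> \<forall>U. x U \<noteq> 0 \<longrightarrow> finite U" by (simp add: Grass_def)

lemma mon_homog: "(\<And>j. e j \<in> Lspace) \<Longrightarrow> homog (length is) (mon e is)"
proof (induction "is")
  case Nil then show ?case by (simp add: homog_gone)
next
  case (Cons i "is")
  then show ?case using homog_gmult[OF homog_L[of "e i"], of "length is" "mon e is"] by simp
qed

lemma gmult_self:
  assumes "v \<in> Lspace"
  shows "gmult v (gmult v x) = (0 :: 'a::field_char_0 grass)"
proof
  fix U
  have "gmult v (gmult v x) U = - gmult v (gmult v x) U"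
    using gmult_anti[OF assms assms, of x] by (metis uminus_apply)
  then show "gmult v (gmult v x) U = 0 U" by simp
qed

lemma mon_Z:
  assumes "\<And>j. e j \<in> Lspace" "m \<in> set is"
  shows "gmult (e m) (mon e is) = (0 :: 'a::field_char_0 grass)"
  using assms(2)
proof (induction "is")
  case Nil then show ?case by simp
next
  case (Cons i "is")
  show ?case
  proof (cases "i = m")
    case True then show ?thesis using gmult_self[OF assms(1)] by simp
  next
    case False
    then have "m \<in> set is" using Cons.prems by simp
    then have "gmult (e m) (mon e is) = 0" by (rule Cons.IH)
    then show ?thesis using gmult_anti[OF assms(1) assms(1), of m i "mon e is"]
      by (simp add: gmult_zero_right)
  qed
qed

lemma dd_mon:
  assumes eL: "\<And>j. e j \<in> Lspace" and K: "finite K"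
    and sK: "\<forall>j\<in>set is. \<forall>k. e j {k} \<noteq> 0 \<longrightarrow> k \<in> K"
    and f0: "\<forall>j\<in>set is. (\<Sum>k\<in>K. f k * e j {k}) = 0"
  shows "dd f K (mon e is) = (0 :: 'a::field_char_0 grass)"
  using sK f0
proof (induction "is")
  case Nil then show ?case by (simp add: dd_gone)
next
  case (Cons i "is")
  have "dd f K (mon e (i # is)) = gsmult (\<Sum>k\<in>K. f k * e i {k}) (mon e is) - gmult (e i) (dd f K (mon e is))"
    using dd_leibniz[OF K eL, of i "mon e is" f] Cons.prems Grass_fin[OF mon_Grass[OF eL]] by simp
  also have "\<dots> = 0"
  proof -
    have h: "dd f K (mon e is) = 0" using Cons.IH Cons.prems by (simp add: zero_fun_def)
    have h2: "(\<Sum>k\<in>K. f k * e i {k}) = 0" using Cons.prems by simp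
    show ?thesis by (simp only: h h2 gmult_zero_right) (simp add: gsmult_def fun_eq_iff)
  qed
  finally show ?case .
qed

lemma mon_NZ:
  assumes B: "is_basis_seq_L e" and n: "n \<notin> set js" and nz: "mon e js \<noteq> 0"
  shows "gmult (e n) (mon e js) \<noteq> (0 :: 'a::field_char_0 grass)"
proof
  assume z: "gmult (e n) (mon e js) = 0"
  have eL: "\<And>j. e j \<in> Lspace" using B by (auto simp: is_basis_seq_L_def is_basis_L_def)
  obtain K f where K: "finite K" and Kin: "\<forall>j\<in>insert n (set js). \<forall>k. e j {k} \<noteq> 0 \<longrightarrow> k \<in> K"
    and fv: "\<forall>j\<in>insert n (set js). (\<Sum>k\<in>K. f k * e j {k}) = (if j = n then 1 else (0::'a))"
    using dual_exists[OF B, of "insert n (set js)" n] by auto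
  have d0: "dd f K (mon e js) = 0"
    by (rule dd_mon[OF eL K]) (use Kin fv n in auto)
  have "dd f K (gmult (e n) (mon e js)) = gsmult (\<Sum>k\<in>K. f k * e n {k}) (mon e js) - gmult (e n) (dd f K (mon e js))"
    using dd_leibniz[OF K eL, of n "mon e js" f] Kin Grass_fin[OF mon_Grass[OF eL]] by simp
  also have "\<dots> = mon e js" using fv d0 by (simp add: gmult_zero_right gsmult_def)
  finally have "dd f K (gmult (e n) (mon e js)) = mon e js" .
  then show False using z nz by (simp add: dd_zero)
qed

lemma aut_facts:
  assumes aut: "grass_aut \<phi>"
  shows aut_add: "\<And>x y. x \<in> Grass \<Longrightarrow> y \<in> Grass \<Longrightarrow> \<phi> (x + y) = \<phi> x + \<phi> y"
    and aut_smult: "\<And>c x. x \<in> Grass \<Longrightarrow> \<phi> (gsmult c x) = gsmult c (\<phi> x)"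
    and aut_mult: "\<And>x y. x \<in> Grass \<Longrightarrow> y \<in> Grass \<Longrightarrow> \<phi> (gmult x y) = gmult (\<phi> x) (\<phi> y)"
    and aut_one: "\<phi> gone = gone"
    and aut_G: "\<And>x. x \<in> Grass \<Longrightarrow> \<phi> x \<in> Grass"
  using aut unfolding grass_aut_def by (auto simp: bij_betw_apply)

lemma aut_zero: "grass_aut \<phi> \<Longrightarrow> \<phi> 0 = (0::'a::field grass)"
proof -
  assume a: "grass_aut \<phi>"
  have "\<phi> (0 + 0) = \<phi> 0 + \<phi> (0::'a grass)" by (rule aut_add[OF a Grass_zero Grass_zero])
  then show ?thesis by simp
qed

lemma aut_neg: "grass_aut \<phi> \<Longrightarrow> x \<in> Grass \<Longrightarrow> \<phi> (- x) = - \<phi> (x::'a::field grass)"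
proof -
  assume a: "grass_aut \<phi>" and x: "x \<in> Grass"
  have "\<phi> (x + - x) = \<phi> x + \<phi> (- x)" by (rule aut_add[OF a x Grass_uminus[OF x]])
  then have "\<phi> x + \<phi> (- x) = 0" using aut_zero[OF a] by simp
  then show ?thesis by (simp add: eq_neg_iff_add_eq_0 add.commute)
qed

lemma aut_mon:
  assumes a: "grass_aut \<phi>" and eL: "\<And>j. e j \<in> Lspace"
  shows "\<phi> (mon e is) = foldr gmult (map (\<lambda>j. \<phi> (e j)) is) gone"
proof (induction "is")
  case Nil then show ?case using aut_one[OF a] by simp
next
  case (Cons i "is")
  have "\<phi> (mon e (i # is)) = gmult (\<phi> (e i)) (\<phi> (mon e is))"
    using aut_mult[OF a Lspace_Grass[THEN subsetD, OF eL] mon_Grass[OF eL]] by simp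
  then show ?case using Cons by simp
qed

lemma prod_expand:
  assumes eL: "\<And>j. e j \<in> Lspace" and y: "\<And>j. geq 2 (y j)"
  shows "\<exists>R. foldr gmult (map (\<lambda>j. - e j + y j) is) gone = gsmult ((-1) ^ length is) (mon e is) + R
          \<and> geq (length is + 1) R"
proof (induction "is")
  case Nil
  show ?case by (intro exI[of _ 0] conjI) (simp_all add: gsmult_def geq_def)
next
  case (Cons i "is")
  then obtain R where R: "foldr gmult (map (\<lambda>j. - e j + y j) is) gone = gsmult ((-1) ^ length is) (mon e is) + R"
    and gR: "geq (length is + 1) R" by blast
  define s :: 'a where "s = (-1) ^ length is"
  define M where "M = mon e is"
  have "foldr gmult (map (\<lambda>j. - e j + y j) (i # is)) gone = gmult (- e i + y i) (gsmult s M + R)"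
    using R by (simp add: s_def M_def)
  also have "\<dots> = gsmult (- s) (gmult (e i) M) + (- gmult (e i) R + gsmult s (gmult (y i) M) + gmult (y i) R)"
    by (simp only: gmult_add_left gmult_add_right gmult_uminus_left gmult_smult_right)
       (simp add: gsmult_def fun_eq_iff algebra_simps)
  finally have eq: "foldr gmult (map (\<lambda>j. - e j + y j) (i # is)) gone = gsmult ((-1) ^ length (i # is)) (mon e (i # is)) + (- gmult (e i) R + gsmult s (gmult (y i) M) + gmult (y i) R)"
    by (simp add: s_def M_def)
  have hM: "geq (length is) M" unfolding M_def by (rule homog_geq[OF mon_homog[OF eL]])
  have g1: "geq (length (i # is) + 1) (gmult (e i) R)"
    using geq_gmult[OF homog_geq[OF homog_L[OF eL]] gR] by simp
  have g2: "geq (length (i # is) + 1) (gmult (y i) M)"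
    using geq_gmult[OF y hM] by (simp add: add.commute)
  have g3: "geq (length (i # is) + 1) (gmult (y i) R)"
    using geq_mono[OF geq_gmult[OF y gR], of "length (i # is) + 1"] by simp
  have "geq (length (i # is) + 1) (- gmult (e i) R + gsmult s (gmult (y i) M) + gmult (y i) R)"
    by (intro geq_add geq_uminus geq_smult g1 g2 g3)
  with eq show ?case by blast
qed

lemma homog_zero: "homog d x \<Longrightarrow> card U \<noteq> d \<Longrightarrow> x U = 0"
  by (auto simp: homog_def)

lemma rel_lemma:
  fixes \<phi> :: "'a::field_char_0 grass \<Rightarrow> 'a grass"
  assumes aut: "grass_aut \<phi>" and eL: "\<And>j. e j \<in> Lspace"
    and xn: "\<phi> (e n) = - e n + gsmult cn (mon e isn)"
    and xm: "\<phi> (e m) = - e m + gsmult cm (mon e ism)"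
    and evn: "even (length isn)" and evm: "even (length ism)"
    and ln: "length isn \<ge> 2" and lm: "length ism \<ge> 2"
  shows "cm * gmult (e n) (mon e ism) U + cn * gmult (e m) (mon e isn) U = 0"
proof -
  define bn where "bn = mon e isn"
  define bm where "bm = mon e ism"
  have eG: "\<And>j. e j \<in> Grass" using eL Lspace_Grass by blast
  have eF: "\<And>j. \<forall>U. e j U \<noteq> 0 \<longrightarrow> finite U" using Grass_fin[OF eG] by blast
  have anti: "gmult (e n) (e m) = - gmult (e m) (e n)"
    using gmult_anti[OF eL eL, of n m gone] gmult_gone_right[OF eF] gmult_gone_right[OF eF] by simp
  have "\<phi> (gmult (e n) (e m)) = - \<phi> (gmult (e m) (e n))"
    using anti aut_neg[OF aut Grass_gmult[OF eG eG]] by simp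
  then have XY: "gmult (\<phi> (e n)) (\<phi> (e m)) + gmult (\<phi> (e m)) (\<phi> (e n)) = 0"
    using aut_mult[OF aut eG eG] by simp
  have hbn: "homog (length isn) bn" unfolding bn_def by (rule mon_homog[OF eL])
  have hbm: "homog (length ism) bm" unfolding bm_def by (rule mon_homog[OF eL])
  have cn_: "gmult bn (e m) = gmult (e m) bn"
    using gmult_comm_L[OF hbn eL] evn by (simp add: gsmult_def)
  have cm_: "gmult bm (e n) = gmult (e n) bm"
    using gmult_comm_L[OF hbm eL] evm by (simp add: gsmult_def)
  have ex1: "gmult (- e n + gsmult cn bn) (- e m + gsmult cm bm) U = gmult (e n) (e m) U - cm * gmult (e n) bm U - cn * gmult (e m) bn U + cn * cm * gmult bn bm U"
    by (simp only: gmult_add_left gmult_add_right gmult_uminus_left gmult_uminus_right gmult_smult_left gmult_smult_right cn_)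
       (simp add: gsmult_def algebra_simps)
  have ex2: "gmult (- e m + gsmult cm bm) (- e n + gsmult cn bn) U = gmult (e m) (e n) U - cn * gmult (e m) bn U - cm * gmult (e n) bm U + cm * cn * gmult bm bn U"
    by (simp only: gmult_add_left gmult_add_right gmult_uminus_left gmult_uminus_right gmult_smult_left gmult_smult_right cm_)
       (simp add: gsmult_def algebra_simps)
  have anti_U: "gmult (e m) (e n) U = - gmult (e n) (e m) U" using anti by simp
  have main: "2 * (cm * gmult (e n) bm U + cn * gmult (e m) bn U) = cn * cm * (gmult bn bm U + gmult bm bn U)"
  proof -
    have "(gmult (\<phi> (e n)) (\<phi> (e m)) + gmult (\<phi> (e m)) (\<phi> (e n))) U = 0" using XY by simp
    then have "gmult (- e n + gsmult cn bn) (- e m + gsmult cm bm) U + gmult (- e m + gsmult cm bm) (- e n + gsmult cn bn) U = 0"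
      using xn xm by (simp add: bn_def bm_def)
    then show ?thesis unfolding ex1 ex2 anti_U by (simp add: algebra_simps)
  qed
  have hA: "homog (1 + length ism) (gmult (e n) bm)" by (rule homog_gmult[OF homog_L[OF eL] hbm])
  have hB: "homog (1 + length isn) (gmult (e m) bn)" by (rule homog_gmult[OF homog_L[OF eL] hbn])
  have hP: "homog (length isn + length ism) (gmult bn bm)" by (rule homog_gmult[OF hbn hbm])
  have hQ: "homog (length ism + length isn) (gmult bm bn)" by (rule homog_gmult[OF hbm hbn])
  show ?thesis
  proof (cases "card U = length isn + length ism")
    case True
    then have "gmult (e n) bm U = 0" "gmult (e m) bn U = 0"
      using homog_zero[OF hA] homog_zero[OF hB] ln lm by auto
    then show ?thesis by (simp add: bn_def bm_def)
  next
    case False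
    then have "gmult bn bm U = 0" "gmult bm bn U = 0"
      using homog_zero[OF hP] homog_zero[OF hQ] by auto
    then have "2 * (cm * gmult (e n) bm U + cn * gmult (e m) bn U) = 0"
      using main by (simp only: add_0 mult_zero_right)
    then have "cm * gmult (e n) bm U + cn * gmult (e m) bn U = 0"
      by (metis mult_eq_0_iff zero_neq_numeral)
    then show ?thesis by (simp add: bn_def bm_def)
  qed
qed

theorem mainTheorem11:
  shows "\<not> (\<exists>(\<phi> :: 'a::field_char_0 grass \<Rightarrow> 'a grass).
            grass_aut \<phi> \<and> involutive_on_E \<phi> \<and> type4 \<phi> \<and>
            (\<exists>e. is_basis_seq_L e \<and>
                 (\<forall>n. \<exists>c b. c \<noteq> 0 \<and> monomial_in e b \<and> \<phi> (e n) = - e n + gsmult c b)))"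
proof
  assume "\<exists>(\<phi> :: 'a::field_char_0 grass \<Rightarrow> 'a grass).
            grass_aut \<phi> \<and> involutive_on_E \<phi> \<and> type4 \<phi> \<and>
            (\<exists>e. is_basis_seq_L e \<and>
                 (\<forall>n. \<exists>c b. c \<noteq> 0 \<and> monomial_in e b \<and> \<phi> (e n) = - e n + gsmult c b))"
  then obtain \<phi> :: "'a grass \<Rightarrow> 'a grass" and e where aut: "grass_aut \<phi>" and inv: "involutive_on_E \<phi>"
    and t4: "type4 \<phi>" and B: "is_basis_seq_L e"
    and H: "\<forall>n. \<exists>c b. c \<noteq> 0 \<and> monomial_in e b \<and> \<phi> (e n) = - e n + gsmult c b"
    by blast
  have eL: "\<And>j. e j \<in> Lspace" using B by (auto simp: is_basis_seq_L_def is_basis_L_def)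
  have eG: "\<And>j. e j \<in> Grass" using eL Lspace_Grass by blast
  obtain c where "\<forall>n. \<exists>b. c n \<noteq> 0 \<and> monomial_in e b \<and> \<phi> (e n) = - e n + gsmult (c n) b"
    using choice[OF H] by (elim exE) blast
  then obtain b where cb: "\<forall>n. c n \<noteq> 0 \<and> monomial_in e (b n) \<and> \<phi> (e n) = - e n + gsmult (c n) (b n)"
    by (metis choice)
  have "\<forall>n. \<exists>is. is \<noteq> [] \<and> sorted_wrt (<) is \<and> b n = mon e is"
  proof
    fix n
    have "monomial_in e (b n)" using cb by blast
    then obtain "is" where "is \<noteq> [] \<and> sorted_wrt (<) is \<and> b n = foldr gmult (map e is) gone"
      unfolding monomial_in_def by blast
    then show "\<exists>is. is \<noteq> [] \<and> sorted_wrt (<) is \<and> b n = mon e is"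
      by (intro exI[of _ "is"]) (simp add: mon_def)
  qed
  then obtain isf where isf: "\<forall>n. isf n \<noteq> [] \<and> sorted_wrt (<) (isf n) \<and> b n = mon e (isf n)"
    by (metis choice)
  define M where "M = (\<lambda>n. mon e (isf n))"
  have cnz: "\<And>n. c n \<noteq> 0" using cb by blast
  have xn: "\<phi> (e n) = - e n + gsmult (c n) (M n)" for n
  proof -
    have "\<phi> (e n) = - e n + gsmult (c n) (b n)" using cb by blast
    moreover have "b n = M n" using isf by (simp add: M_def)
    ultimately show ?thesis by simp
  qed
  have MG: "\<And>n. M n \<in> Grass" unfolding M_def by (rule mon_Grass[OF eL])
  have basis: "is_basis_L (range e)" using B by (simp add: is_basis_seq_L_def)
  have t4': "\<phi> (e n) \<noteq> e n \<and> \<phi> (e n) \<noteq> - e n" for n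
  proof -
    have h: "is_basis_L (range e) \<longrightarrow> (\<forall>v\<in>range e. \<phi> v \<noteq> v \<and> \<phi> v \<noteq> - v)"
      using t4 unfolding type4_def by (rule spec)
    have "\<forall>v\<in>range e. \<phi> v \<noteq> v \<and> \<phi> v \<noteq> - v" using h basis by (rule mp)
    then show ?thesis by (rule bspec) (rule rangeI)
  qed
  have Mnz: "\<And>n. M n \<noteq> 0"
  proof
    fix n assume "M n = 0"
    then have "\<phi> (e n) = - e n" using xn[of n] by (simp add: gsmult_def zero_fun_def)
    then show False using t4' by blast
  qed
  have Mfix: "\<phi> (M n) = M n" for n
  proof
    fix U
    have "\<phi> (\<phi> (e n)) = e n" using inv eG unfolding involutive_on_E_def by blast
    also have "\<phi> (\<phi> (e n)) = \<phi> (- e n) + \<phi> (gsmult (c n) (M n))"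
      unfolding xn by (rule aut_add[OF aut Grass_uminus[OF eG] Grass_smult[OF MG]])
    also have "\<dots> = - \<phi> (e n) + gsmult (c n) (\<phi> (M n))"
      using aut_neg[OF aut eG] aut_smult[OF aut MG] by simp
    finally have eqf: "- \<phi> (e n) + gsmult (c n) (\<phi> (M n)) = e n" .
    have "e n U = - \<phi> (e n) U + c n * \<phi> (M n) U"
      using fun_cong[OF eqf, of U] by (simp add: gsmult_def)
    then have "c n * \<phi> (M n) U = c n * M n U" unfolding xn by (simp add: gsmult_def)
    then show "\<phi> (M n) U = M n U" using cnz by simp
  qed
  have len2: "length (isf n) \<ge> 2" for n
  proof (rule ccontr)
    assume l: "\<not> 2 \<le> length (isf n)"
    have ne: "isf n \<noteq> []" using isf by blast
    then obtain k l where al: "isf n = k # l" by (cases "isf n") auto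
    with l have "l = []" by (cases l) auto
    with al have k: "isf n = [k]" by simp
    then have "M n = e k" unfolding M_def using gmult_gone_right[OF Grass_fin[OF eG]] by simp
    then have "\<phi> (e k) = e k" using Mfix[of n] by simp
    then show False using t4' by blast
  qed
  have hM: "\<And>n. homog (length (isf n)) (M n)" unfolding M_def by (rule mon_homog[OF eL])
  have even: "even (length (isf n))" for n
  proof (rule ccontr)
    assume odd: "\<not> even (length (isf n))"
    define y where "y = (\<lambda>j. gsmult (c j) (M j))"
    have gy: "\<And>j. geq 2 (y j)" unfolding y_def
      using geq_smult[OF geq_mono[OF homog_geq[OF hM] len2]] by blast
    obtain R where R: "foldr gmult (map (\<lambda>j. - e j + y j) (isf n)) gone = gsmult ((-1) ^ length (isf n)) (mon e (isf n)) + R"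
      and gR: "geq (length (isf n) + 1) R"
      using prod_expand[of e y "isf n", OF eL gy] by blast
    have "\<phi> (M n) = foldr gmult (map (\<lambda>j. \<phi> (e j)) (isf n)) gone"
      unfolding M_def by (rule aut_mon[OF aut eL])
    also have "(\<lambda>j. \<phi> (e j)) = (\<lambda>j. - e j + y j)" using xn by (simp add: y_def fun_eq_iff)
    finally have A: "\<phi> (M n) = foldr gmult (map (\<lambda>j. - e j + y j) (isf n)) gone" .
    have "M n = \<phi> (M n)" using Mfix by simp
    also have "\<dots> = foldr gmult (map (\<lambda>j. - e j + y j) (isf n)) gone" by (rule A)
    also have "\<dots> = gsmult ((-1) ^ length (isf n)) (mon e (isf n)) + R" by (rule R)
    finally have Meq: "M n = gsmult ((-1) ^ length (isf n)) (M n) + R" by (simp only: M_def)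
    have eqU: "M n U = - M n U + R U" for U
      using fun_cong[OF Meq, of U] odd by (simp add: gsmult_def neg_one_odd_power)
    have "M n U = 0" for U
    proof (rule ccontr)
      assume nz: "M n U \<noteq> 0"
      then have "card U = length (isf n)" using hM unfolding homog_def by blast
      then have "R U = 0" using gR unfolding geq_def by fastforce
      then show False using eqU[of U] nz by simp
    qed
    then show False using Mnz by (auto simp: fun_eq_iff)
  qed
  have rel: "\<And>n m U. c m * gmult (e n) (M m) U + c n * gmult (e m) (M n) U = 0"
    unfolding M_def by (rule rel_lemma[OF aut eL xn[unfolded M_def] xn[unfolded M_def] even even len2 len2])
  have relF: "\<And>n m. gsmult (c m) (gmult (e n) (M m)) + gsmult (c n) (gmult (e m) (M n)) = 0"
    using rel by (simp add: fun_eq_iff gsmult_def)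
  have Z: "\<And>k n. k \<in> set (isf n) \<Longrightarrow> gmult (e k) (M n) = 0"
    unfolding M_def by (rule mon_Z[OF eL])
  have NZ: "\<And>k n. k \<notin> set (isf n) \<Longrightarrow> gmult (e k) (M n) \<noteq> 0"
    unfolding M_def by (rule mon_NZ[OF B]) (use Mnz M_def in auto)
  define S where "S = set (isf 0)"
  have "distinct (isf 0)" using isf by (simp add: strict_sorted_iff)
  then have c2: "card S \<ge> 2" using len2[of 0] by (simp add: S_def distinct_card)
  have "\<not> S \<subseteq> {0}"
  proof
    assume "S \<subseteq> {0}"
    then have "card S \<le> card {0::nat}" by (rule card_mono[rotated]) simp
    then show False using c2 by simp
  qed
  then obtain k where kS: "k \<in> S" and k0: "k \<noteq> 0" by blast
  have claim: "m \<in> set (isf k)" if m: "m \<notin> S" "m \<noteq> 0" for m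
  proof -
    have a: "gmult (e m) (M 0) \<noteq> 0" using NZ m by (simp add: S_def)
    have b: "gmult (e 0) (M m) \<noteq> 0"
    proof
      assume z: "gmult (e 0) (M m) = 0"
      have "c 0 * gmult (e m) (M 0) U = 0" for U using rel[of 0 m U] z by simp
      then have "gmult (e m) (M 0) = 0" using cnz by (simp add: fun_eq_iff)
      then show False using a by simp
    qed
    have c: "0 \<notin> set (isf m)" using Z b by blast
    have kB: "gmult (e k) (gmult (e m) (M 0)) = 0"
      using gmult_anti[OF eL eL, of k m "M 0"] Z[of k 0] kS by (simp add: S_def gmult_zero_right)
    have "gmult (e k) (gsmult (c m) (gmult (e 0) (M m)) + gsmult (c 0) (gmult (e m) (M 0))) = 0"
      using relF[where n=0 and m=m] by (simp add: gmult_zero_right)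
    then have eq: "gsmult (c m) (gmult (e k) (gmult (e 0) (M m))) + gsmult (c 0) (gmult (e k) (gmult (e m) (M 0))) = 0"
      by (simp only: gmult_add_right gmult_smult_right)
    have d: "gmult (e k) (gmult (e 0) (M m)) = 0"
    proof
      fix U
      have "(gsmult (c m) (gmult (e k) (gmult (e 0) (M m))) + gsmult (c 0) (gmult (e k) (gmult (e m) (M 0)))) U = 0"
        using eq by simp
      then have "c m * gmult (e k) (gmult (e 0) (M m)) U = 0" using kB by (simp add: gsmult_def)
      then show "gmult (e k) (gmult (e 0) (M m)) U = 0 U" using cnz by simp
    qed
    have "gmult (e 0) (gmult (e k) (M m)) = 0"
      using gmult_anti[OF eL eL, of 0 k "M m"] d by simp
    then have f: "gmult (e k) (M m) = 0"
      using mon_NZ[OF B, of 0 "k # isf m"] c k0 by (auto simp: M_def)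
    have "c k * gmult (e m) (M k) U = 0" for U using rel[of k m U] f by simp
    then have "gmult (e m) (M k) = 0" using cnz by (simp add: fun_eq_iff)
    then show ?thesis using NZ by blast
  qed
  have "UNIV \<subseteq> insert 0 S \<union> set (isf k)" using claim by blast
  moreover have "finite (insert 0 S \<union> set (isf k))" by (simp add: S_def)
  ultimately show False using finite_subset infinite_UNIV_nat by blast
qed

end
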